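(* Let $\Omega=\bigcup_{k=1}^K\Omega_k$ be a partition of a domain $\Omega$, and let $X$, $Y$, $Z$, $V$, the linear operators $A:X\to Y$, $B:X\to Z$, the data $f\in Y$, $g\in Z$, and the orthonormal bases $\{\Phi_{k,i}\}_{i\ge1}$ of $Y|_{\Omega_k}$ be as in the context. Assume the problem $Au=f$ in $\Omega$, $Bu=g$ on $\partial\Omega$ has a unique solution $u^*\in V$ with an approximating sequence $\{u_n^*\}\subset X$, and assume the norm relation: there are constants $C_1,C_2>0$ such that $C_1\|v\|_V\le\|Av\|_Y+\|Bv\|_Z\le C_2\|v\|_X$ for all $v\in X$. For $k=1,\dots,K$ let $G_k$ be a compact subset of $Y|_{\Omega_k}$ containing $\{(Au_n^*-f)|_{\Omega_k}\}_{n\ge1}$ and let $\tilde V_K=\{v\in X:(Av-f)|_{\Omega_k}\in G_k,\ k=1,\dots,K\}$. Let $\epsilon>0$ and let $\mathbf N_{\epsilon,K}=(N_{\epsilon,1},\dots,N_{\epsilon,K})$ be integers such that $\mathcal J_\tau^{h,\mathbf N_{\epsilon,K}}(v)\ge\mathcal J_\tau(v)-\epsilon$ for all $v\in\tilde V_K$ (such integers exist). Fix $\tau\ge1$. Let $\{\mathfrak N_{\theta,n}\}_{n\ge1}$ be a sequence of function classes (neural network classes), let $\delta_n\to0$, and let $u_n\in\mathfrak N_{\theta,n}\cap\tilde V_K$ be a quasi-minimizer, i.e. $$\mathcal J_\tau^{h,\mathbf N_{\epsilon,K}}(u_n)\le\inf_{w\in\mathfrak N_{\theta,n}\cap\tilde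 V_K}\mathcal J_\tau^{h,\mathbf N_{\epsilon,K}}(w)+\delta_n .$$ Then $$\|u_n-u^*\|_V\le\sqrt2\,C_1^{-1}\Big(\mathcal J_\tau^{h,\mathbf N_{\epsilon,K}}(u_n)+\delta_n+\epsilon\Big)^{1/2}.$$
   Context: Setting: $X$ is a space of functions on $\Omega$ contained in a normed space $V$; $Y$ is a Hilbert space of functions on $\Omega$ and $Y|_{\Omega_k}$ denotes the Hilbert space with the same structure over $\Omega_k$, with $\|w\|_Y^2=\sum_{k=1}^K\|w|_{\Omega_k}\|_{Y|_{\Omega_k}}^2$ (e.g. $Y=L^2$); $Z$ is a normed space of functions on $\partial\Omega$. For each $k$, $\{\Phi_{k,i}\}_{i\ge1}$ is a complete orthonormal basis of $Y|_{\Omega_k}$, and $(w,\Phi_{k,i})_Y$ is the $Y|_{\Omega_k}$ inner product of $w|_{\Omega_k}$ with $\Phi_{k,i}$. Loss functionals: $\mathcal J_\tau(v)=\|f-Av\|_Y^2+\tau\|Bv-g\|_Z^2$ and, for $\mathbf N=(N_1,\dots,N_K)$, $\mathcal J_\tau^{h,\mathbf N}(v)=\sum_{k=1}^K\sum_{i=1}^{N_k}(f-Av,\Phi_{k,i})_Y^2+\tau\|Bv-g\|_Z^2$. Solution concept: $u^*\in V$ is a solution if there is a sequence $\{u_n^*\}\subset X$ (an approximating sequence) with $\|u_n^*-u^*\|_V\to0$ and $\|Au_n^*-f\|_Y+\|Bu_n^*-g\|_Z\to0$. *)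

theory Defs
  imports "HOL-Analysis.Analysis"
begin

definition J_loss ::
  "('v \<Rightarrow> 'y::real_normed_vector) \<Rightarrow> ('v \<Rightarrow> 'z::real_normed_vector)
   \<Rightarrow> 'y \<Rightarrow> 'z \<Rightarrow> real \<Rightarrow> 'v \<Rightarrow> real" where
  "J_loss A B f g \<tau> v = (norm (f - A v))\<^sup>2 + \<tau> * (norm (B v - g))\<^sup>2"

definition Jh_loss ::
  "('v \<Rightarrow> 'y::real_inner) \<Rightarrow> ('v \<Rightarrow> 'z::real_normed_vector)
   \<Rightarrow> 'y \<Rightarrow> 'z \<Rightarrow> real \<Rightarrow> nat \<Rightarrow> (nat \<Rightarrow> 'y \<Rightarrow> 'y) \<Rightarrow> (nat \<Rightarrow> nat \<Rightarrow> 'y)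
   \<Rightarrow> (nat \<Rightarrow> nat) \<Rightarrow> 'v \<Rightarrow> real" where
  "Jh_loss A B f g \<tau> K R \<Phi> N v =
     (\<Sum>k=1..K. \<Sum>i=1..N k. (R k (f - A v) \<bullet> \<Phi> k i)\<^sup>2) + \<tau> * (norm (B v - g))\<^sup>2"

definition norm_on :: "'v::real_vector set \<Rightarrow> ('v \<Rightarrow> real) \<Rightarrow> bool" where
  "norm_on X nX \<longleftrightarrow> subspace X \<and>
     (\<forall>x\<in>X. nX x \<ge> 0 \<and> (nX x = 0 \<longleftrightarrow> x = 0)) \<and>
     (\<forall>x\<in>X. \<forall>y\<in>X. nX (x + y) \<le> nX x + nX y) \<and>
     (\<forall>x\<in>X. \<forall>c. nX (c *\<^sub>R x) = \<bar>c\<bar> * nX x)"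

definition linear_on :: "'v::real_vector set \<Rightarrow> ('v \<Rightarrow> 'w::real_vector) \<Rightarrow> bool" where
  "linear_on X T \<longleftrightarrow> (\<forall>x\<in>X. \<forall>y\<in>X. T (x + y) = T x + T y) \<and>
     (\<forall>x\<in>X. \<forall>c. T (c *\<^sub>R x) = c *\<^sub>R T x)"

definition approx_seq ::
  "'v::real_normed_vector set \<Rightarrow> ('v \<Rightarrow> 'y::real_normed_vector) \<Rightarrow> ('v \<Rightarrow> 'z::real_normed_vector)
   \<Rightarrow> 'y \<Rightarrow> 'z \<Rightarrow> 'v \<Rightarrow> (nat \<Rightarrow> 'v) \<Rightarrow> bool" where
  "approx_seq X A B f g u us \<longleftrightarrow> (\<forall>n. us n \<in> X) \<and>
     (\<lambda>n. norm (us n - u)) \<longlonglongrightarrow> 0 \<and>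
     (\<lambda>n. norm (A (us n) - f) + norm (B (us n) - g)) \<longlonglongrightarrow> 0"

definition is_solution ::
  "'v::real_normed_vector set \<Rightarrow> ('v \<Rightarrow> 'y::real_normed_vector) \<Rightarrow> ('v \<Rightarrow> 'z::real_normed_vector)
   \<Rightarrow> 'y \<Rightarrow> 'z \<Rightarrow> 'v \<Rightarrow> bool" where
  "is_solution X A B f g u \<longleftrightarrow> (\<exists>us. approx_seq X A B f g u us)"

text \<open>R 1, ..., R K model restriction to the pieces Omega_1..Omega_K of the partition:
  orthogonal projections onto mutually orthogonal closed subspaces Y|Omega_k summing to Y,
  with ||w||^2 = sum_k ||w|Omega_k||^2.\<close>
definition restriction_family :: "nat \<Rightarrow> (nat \<Rightarrow> 'y::real_inner \<Rightarrow> 'y) \<Rightarrow> bool" where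
  "restriction_family K R \<longleftrightarrow> K \<ge> 1 \<and>
     (\<forall>k\<in>{1..K}. linear (R k) \<and> (\<forall>w. R k (R k w) = R k w) \<and>
        (\<forall>w w'. R k w \<bullet> w' = w \<bullet> R k w')) \<and>
     (\<forall>j\<in>{1..K}. \<forall>k\<in>{1..K}. j \<noteq> k \<longrightarrow> (\<forall>w. R j (R k w) = 0)) \<and>
     (\<forall>w. w = (\<Sum>k=1..K. R k w)) \<and>
     (\<forall>w. (norm w)\<^sup>2 = (\<Sum>k=1..K. (norm (R k w))\<^sup>2))"

text \<open>Phi 1, Phi 2, ... (indices from 1) is a complete orthonormal basis of the Hilbert space
  S (here S = range of R k, i.e. Y|Omega_k).\<close>
definition complete_ONB :: "'y::real_inner set \<Rightarrow> (nat \<Rightarrow> 'y) \<Rightarrow> bool" where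
  "complete_ONB S \<Phi> \<longleftrightarrow> (\<forall>i\<ge>1. \<Phi> i \<in> S) \<and>
     (\<forall>i\<ge>1. \<forall>j\<ge>1. \<Phi> i \<bullet> \<Phi> j = (if i = j then 1 else 0)) \<and>
     closure (span (\<Phi> ` {1..})) = S"

end

theory Submission
  imports Defs
begin

theorem mainTheorem2:
  fixes X :: "'v::real_normed_vector set"
    and nX :: "'v \<Rightarrow> real"
    and A :: "'v \<Rightarrow> 'y::{real_inner, complete_space}"
    and B :: "'v \<Rightarrow> 'z::real_normed_vector"
    and f :: 'y and g :: 'z
    and K :: nat and R :: "nat \<Rightarrow> 'y \<Rightarrow> 'y" and \<Phi> :: "nat \<Rightarrow> nat \<Rightarrow> 'y"
    and ustar :: 'v and us :: "nat \<Rightarrow> 'v"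
    and C1 C2 :: real
    and G :: "nat \<Rightarrow> 'y set"
    and \<epsilon> \<tau> :: real and N :: "nat \<Rightarrow> nat"
    and NN :: "nat \<Rightarrow> 'v set" and \<delta> :: "nat \<Rightarrow> real" and u :: "nat \<Rightarrow> 'v"
  assumes X: "norm_on X nX"
    and A: "linear_on X A" and B: "linear_on X B"
    and R: "restriction_family K R"
    and Phi: "\<forall>k\<in>{1..K}. complete_ONB (range (R k)) (\<Phi> k)"
    and sol: "is_solution X A B f g ustar"
    and uniq: "\<forall>w. is_solution X A B f g w \<longrightarrow> w = ustar"
    and approx: "approx_seq X A B f g ustar us"
    and C: "C1 > 0" "C2 > 0"
    and normrel: "\<forall>v\<in>X. C1 * norm v \<le> norm (A v) + norm (B v)
                        \<and> norm (A v) + norm (B v) \<le> C2 * nX v"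
    and G: "\<forall>k\<in>{1..K}. compact (G k) \<and> G k \<subseteq> range (R k)
                \<and> (\<forall>n. R k (A (us n) - f) \<in> G k)"
    and eps: "\<epsilon> > 0"
    and Neps: "\<forall>v\<in>{v\<in>X. \<forall>k\<in>{1..K}. R k (A v - f) \<in> G k}.
                 Jh_loss A B f g \<tau> K R \<Phi> N v \<ge> J_loss A B f g \<tau> v - \<epsilon>"
    and tau: "\<tau> \<ge> 1"
    and delta: "\<delta> \<longlonglongrightarrow> 0"
    and un: "\<forall>n. u n \<in> NN n \<inter> {v\<in>X. \<forall>k\<in>{1..K}. R k (A v - f) \<in> G k}"
    and quasi: "\<forall>n. Jh_loss A B f g \<tau> K R \<Phi> N (u n) \<le>
                 (INF w\<in>NN n \<inter> {v\<in>X. \<forall>k\<in>{1..K}. R k (A v - f) \<in> G k}.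
                    Jh_loss A B f g \<tau> K R \<Phi> N w) + \<delta> n"
  shows "\<forall>n. norm (u n - ustar) \<le>
           sqrt 2 * inverse C1 * sqrt (Jh_loss A B f g \<tau> K R \<Phi> N (u n) + \<delta> n + \<epsilon>)"
proof
  fix n
  let ?S = "NN n \<inter> {v\<in>X. \<forall>k\<in>{1..K}. R k (A v - f) \<in> G k}"
  let ?Jh = "Jh_loss A B f g \<tau> K R \<Phi> N"
  define v where "v = u n"
  define a where "a = norm (A v - f)"
  define b where "b = norm (B v - g)"
  have vS: "v \<in> ?S" using un v_def by auto
  have vX: "v \<in> X" using vS by auto
  have sub: "subspace X" using X unfolding norm_on_def by auto
  have usX: "\<And>m. us m \<in> X" using approx unfolding approx_seq_def by auto
  have Jh_nn: "\<And>w. ?Jh w \<ge> 0"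
    unfolding Jh_loss_def using tau by (intro add_nonneg_nonneg sum_nonneg) auto
  have "(INF w\<in>?S. ?Jh w) \<le> ?Jh v"
    proof (rule cInf_lower)
    show "?Jh v \<in> ?Jh ` ?S" using vS by (rule imageI)
    show "bdd_below (?Jh ` ?S)" by (rule bdd_belowI2[where m=0]) (rule Jh_nn)
  qed
  moreover have "?Jh v \<le> (INF w\<in>?S. ?Jh w) + \<delta> n" using quasi v_def by blast
  ultimately have dpos: "\<delta> n \<ge> 0" by linarith
  have lin_minus: "\<And>T::'v \<Rightarrow> 'w::real_vector. linear_on X T \<Longrightarrow> x \<in> X \<Longrightarrow> y \<in> X \<Longrightarrow> T (x - y) = T x - T y" for x y
  proof -
    fix T :: "'v \<Rightarrow> 'w::real_vector" assume T: "linear_on X T" and x: "x \<in> X" and y: "y \<in> X"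
    have my: "(-1) *\<^sub>R y \<in> X" using sub y by (rule subspace_scale)
    have "T (x - y) = T (x + (-1) *\<^sub>R y)" by simp
    also have "\<dots> = T x + T ((-1) *\<^sub>R y)" using T x my unfolding linear_on_def by blast
    also have "\<dots> = T x - T y" using T y unfolding linear_on_def by (metis scaleR_minus1_left diff_conv_add_uminus)
    finally show "T (x - y) = T x - T y" .
  qed
  define e where "e m = norm (A (us m) - f) + norm (B (us m) - g)" for m
  define d where "d m = norm (us m - ustar)" for m
  have bound: "C1 * norm (v - ustar) \<le> a + b + (e m + C1 * d m)" for m
  proof -
    have diffX: "v - us m \<in> X" using sub vX usX by (simp add: subspace_diff)
    have "C1 * norm (v - us m) \<le> norm (A (v - us m)) + norm (B (v - us m))"
      using normrel diffX by blast
    also have "\<dots> = norm (A v - A (us m)) + norm (B v - B (us m))"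
      using lin_minus[OF A vX usX] lin_minus[OF B vX usX] by simp
    also have "\<dots> \<le> a + b + e m"
    proof -
      have "norm (A v - A (us m)) \<le> a + norm (A (us m) - f)"
        unfolding a_def by (rule norm_diff_triangle_le[where y=f]) (auto simp: norm_minus_commute)
      moreover have "norm (B v - B (us m)) \<le> b + norm (B (us m) - g)"
        unfolding b_def by (rule norm_diff_triangle_le[where y=g]) (auto simp: norm_minus_commute)
      ultimately show ?thesis unfolding e_def by simp
    qed
    finally have 1: "C1 * norm (v - us m) \<le> a + b + e m" .
    have "norm (v - ustar) \<le> norm (v - us m) + d m"
      unfolding d_def by (rule norm_diff_triangle_le[where y="us m"]) auto
    hence "C1 * norm (v - ustar) \<le> C1 * norm (v - us m) + C1 * d m"
      using C(1) by (metis distrib_left mult_left_mono less_imp_le)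
    thus ?thesis using 1 by linarith
  qed
  have lim: "(\<lambda>m. a + b + (e m + C1 * d m)) \<longlonglongrightarrow> a + b + (0 + C1 * 0)"
    using approx unfolding approx_seq_def e_def d_def
    by (intro tendsto_intros) auto
  have step1: "C1 * norm (v - ustar) \<le> a + b"
    using tendsto_le[OF trivial_limit_sequentially lim tendsto_const[of "C1 * norm (v - ustar)"]]
      bound by simp
  have "a\<^sup>2 + b\<^sup>2 \<le> J_loss A B f g \<tau> v"
  proof -
    have "b\<^sup>2 \<le> \<tau> * b\<^sup>2" using tau by (simp add: mult_right_mono[of 1 \<tau> "b\<^sup>2", simplified])
    thus ?thesis unfolding J_loss_def a_def b_def by (simp add: norm_minus_commute)
  qed
  also have "\<dots> \<le> ?Jh v + \<epsilon>" using Neps vS by auto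
  finally have ab: "a\<^sup>2 + b\<^sup>2 \<le> ?Jh v + \<delta> n + \<epsilon>" using dpos by linarith
  have sq: "2 * (a\<^sup>2 + b\<^sup>2) - (a + b)\<^sup>2 = (a - b)\<^sup>2" by (simp add: power2_eq_square algebra_simps)
  have "(a + b)\<^sup>2 \<le> 2 * (a\<^sup>2 + b\<^sup>2)" using sq zero_le_power2[of "a - b"] by linarith
  also have "\<dots> \<le> 2 * (?Jh v + \<delta> n + \<epsilon>)" using ab by simp
  finally have "a + b \<le> sqrt (2 * (?Jh v + \<delta> n + \<epsilon>))"
    using real_le_rsqrt by blast
  hence "C1 * norm (v - ustar) \<le> sqrt 2 * sqrt (?Jh v + \<delta> n + \<epsilon>)"
    using step1 real_sqrt_mult[of 2 "?Jh v + \<delta> n + \<epsilon>"] by linarith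
  hence "norm (v - ustar) \<le> inverse C1 * (sqrt 2 * sqrt (?Jh v + \<delta> n + \<epsilon>))"
    using C(1) by (simp add: field_simps)
  thus "norm (u n - ustar) \<le> sqrt 2 * inverse C1 * sqrt (?Jh (u n) + \<delta> n + \<epsilon>)"
    unfolding v_def by (simp add: mult_ac)
qed

end
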